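(* Let $k$ be a field. Every nondegenerate variety of representations of groups over $k$ is an IBN-variety.
   Context: A representation of a group over $k$ is a two-sorted algebra ($\Gamma=\{1,2\}$): sort 1 is a group $G$ (operations: multiplication, inverse, constant $1$), sort 2 is a $k$-vector space $V$ (operations $+,0,-$ and a unary scalar multiplication by each $\lambda\in k$), and there is an action $\circ$ of type $(1,2;2)$ satisfying $g\circ(u+v)=g\circ u+g\circ v$, $g\circ(\lambda v)=\lambda(g\circ v)$, $(gh)\circ v=g\circ(h\circ v)$, $1\circ v=v$. A variety of representations of groups is a class of such representations defined by (two-sorted) identities. A two-sorted variety is nondegenerate if neither $x^{(1)}_1=x^{(1)}_2$ nor $x^{(2)}_1=x^{(2)}_2$ is an identity of it. It is an IBN-variety if for any free algebras $F(Y),F(Z)$ of the variety with finite free generating sets $Y=Y^{(1)}\uplus Y^{(2)}$, $Z=Z^{(1)}\uplus Z^{(2)}$ (split by sort), $F(Y)\cong F(Z)$ implies $|Y^{(1)}|=|Z^{(1)}|$ and $|Y^{(2)}|=|Z^{(2)}|$. *)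

theory Defs
  imports Main
begin

text \<open>Terms of sort 1 (group words) and of sort 2 (vector terms).  Variables are
  indexed by natural numbers: GV i is the sort-1 variable x_i^(1), VV i the
  sort-2 variable x_i^(2).  Scalar multiplication by lambda is the unary operation VSc lambda.\<close>

datatype gt = GV nat | GOne | GMul gt gt | GInv gt

datatype 'k vt = VV nat | VZero | VAdd "'k vt" "'k vt" | VNeg "'k vt"
  | VSc 'k "'k vt" | VAct gt "'k vt"

datatype 'k ident = GEq gt gt | VEq "'k vt" "'k vt"

record ('g, 'v, 'k) rep_struct =
  gcar :: "'g set"
  gmul :: "'g \<Rightarrow> 'g \<Rightarrow> 'g"
  ginv :: "'g \<Rightarrow> 'g"
  gone :: "'g"
  vcar :: "'v set"
  vadd :: "'v \<Rightarrow> 'v \<Rightarrow> 'v"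
  vzero :: "'v"
  vneg :: "'v \<Rightarrow> 'v"
  vsc :: "'k \<Rightarrow> 'v \<Rightarrow> 'v"
  act :: "'g \<Rightarrow> 'v \<Rightarrow> 'v"

primrec geval :: "('g, 'v, 'k) rep_struct \<Rightarrow> (nat \<Rightarrow> 'g) \<Rightarrow> gt \<Rightarrow> 'g" where
  "geval A \<sigma> (GV i) = \<sigma> i"
| "geval A \<sigma> GOne = gone A"
| "geval A \<sigma> (GMul s t) = gmul A (geval A \<sigma> s) (geval A \<sigma> t)"
| "geval A \<sigma> (GInv s) = ginv A (geval A \<sigma> s)"

primrec veval :: "('g, 'v, 'k) rep_struct \<Rightarrow> (nat \<Rightarrow> 'g) \<Rightarrow> (nat \<Rightarrow> 'v) \<Rightarrow> 'k vt \<Rightarrow> 'v" where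
  "veval A \<sigma> \<tau> (VV i) = \<tau> i"
| "veval A \<sigma> \<tau> VZero = vzero A"
| "veval A \<sigma> \<tau> (VAdd s t) = vadd A (veval A \<sigma> \<tau> s) (veval A \<sigma> \<tau> t)"
| "veval A \<sigma> \<tau> (VNeg s) = vneg A (veval A \<sigma> \<tau> s)"
| "veval A \<sigma> \<tau> (VSc c s) = vsc A c (veval A \<sigma> \<tau> s)"
| "veval A \<sigma> \<tau> (VAct g s) = act A (geval A \<sigma> g) (veval A \<sigma> \<tau> s)"

primrec sat :: "('g, 'v, 'k) rep_struct \<Rightarrow> 'k ident \<Rightarrow> bool" where
  "sat A (GEq s t) = (\<forall>(\<sigma>::nat \<Rightarrow> 'g) (\<tau>::nat \<Rightarrow> 'v). (\<forall>i. \<sigma> i \<in> gcar A) \<longrightarrow> (\<forall>i. \<tau> i \<in> vcar A) \<longrightarrow>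
       geval A \<sigma> s = geval A \<sigma> t)"
| "sat A (VEq s t) = (\<forall>\<sigma> \<tau>. (\<forall>i. \<sigma> i \<in> gcar A) \<longrightarrow> (\<forall>i. \<tau> i \<in> vcar A) \<longrightarrow>
       veval A \<sigma> \<tau> s = veval A \<sigma> \<tau> t)"

definition closed_struct :: "('g, 'v, 'k) rep_struct \<Rightarrow> bool" where
  "closed_struct A \<longleftrightarrow>
     (\<forall>x\<in>gcar A. \<forall>y\<in>gcar A. gmul A x y \<in> gcar A) \<and>
     (\<forall>x\<in>gcar A. ginv A x \<in> gcar A) \<and> gone A \<in> gcar A \<and>
     (\<forall>u\<in>vcar A. \<forall>v\<in>vcar A. vadd A u v \<in> vcar A) \<and>
     (\<forall>u\<in>vcar A. vneg A u \<in> vcar A) \<and> vzero A \<in> vcar A \<and>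
     (\<forall>c. \<forall>u\<in>vcar A. vsc A c u \<in> vcar A) \<and>
     (\<forall>x\<in>gcar A. \<forall>u\<in>vcar A. act A x u \<in> vcar A)"

definition base_ids :: "'k::field ident set" where
  "base_ids =
    (let x = GV 0; y = GV 1; z = GV 2; u = VV 0; v = VV 1; w = VV 2 in
     {GEq (GMul (GMul x y) z) (GMul x (GMul y z)),
      GEq (GMul GOne x) x,
      GEq (GMul x GOne) x,
      GEq (GMul (GInv x) x) GOne,
      GEq (GMul x (GInv x)) GOne,
      VEq (VAdd (VAdd u v) w) (VAdd u (VAdd v w)),
      VEq (VAdd u v) (VAdd v u),
      VEq (VAdd VZero u) u,
      VEq (VAdd (VNeg u) u) VZero,
      VEq (VSc 1 u) u,
      VEq (VAct x (VAdd u v)) (VAdd (VAct x u) (VAct x v)),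
      VEq (VAct (GMul x y) u) (VAct x (VAct y u)),
      VEq (VAct GOne u) u}
     \<union> (\<Union>c. \<Union>d.
         {VEq (VSc c (VAdd u v)) (VAdd (VSc c u) (VSc c v)),
          VEq (VSc (c + d) u) (VAdd (VSc c u) (VSc d u)),
          VEq (VSc (c * d) u) (VSc c (VSc d u)),
          VEq (VAct x (VSc c u)) (VSc c (VAct x u))}))"

definition is_rep :: "('g, 'v, 'k::field) rep_struct \<Rightarrow> bool" where
  "is_rep A \<longleftrightarrow> closed_struct A \<and> (\<forall>e\<in>base_ids. sat A e)"

definition in_variety :: "'k::field ident set \<Rightarrow> ('g, 'v, 'k) rep_struct \<Rightarrow> bool" where
  "in_variety E A \<longleftrightarrow> is_rep A \<and> (\<forall>e\<in>E. sat A e)"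

primrec gsubst :: "(nat \<Rightarrow> gt) \<Rightarrow> gt \<Rightarrow> gt" where
  "gsubst \<sigma> (GV i) = \<sigma> i"
| "gsubst \<sigma> GOne = GOne"
| "gsubst \<sigma> (GMul s t) = GMul (gsubst \<sigma> s) (gsubst \<sigma> t)"
| "gsubst \<sigma> (GInv s) = GInv (gsubst \<sigma> s)"

primrec vsubst :: "(nat \<Rightarrow> gt) \<Rightarrow> (nat \<Rightarrow> 'k vt) \<Rightarrow> 'k vt \<Rightarrow> 'k vt" where
  "vsubst \<sigma> \<tau> (VV i) = \<tau> i"
| "vsubst \<sigma> \<tau> VZero = VZero"
| "vsubst \<sigma> \<tau> (VAdd s t) = VAdd (vsubst \<sigma> \<tau> s) (vsubst \<sigma> \<tau> t)"
| "vsubst \<sigma> \<tau> (VNeg s) = VNeg (vsubst \<sigma> \<tau> s)"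
| "vsubst \<sigma> \<tau> (VSc c s) = VSc c (vsubst \<sigma> \<tau> s)"
| "vsubst \<sigma> \<tau> (VAct g s) = VAct (gsubst \<sigma> g) (vsubst \<sigma> \<tau> s)"

primrec gvars :: "gt \<Rightarrow> nat set" where
  "gvars (GV i) = {i}"
| "gvars GOne = {}"
| "gvars (GMul s t) = gvars s \<union> gvars t"
| "gvars (GInv s) = gvars s"

primrec vgvars :: "'k vt \<Rightarrow> nat set" where
  "vgvars (VV i) = {}"
| "vgvars VZero = {}"
| "vgvars (VAdd s t) = vgvars s \<union> vgvars t"
| "vgvars (VNeg s) = vgvars s"
| "vgvars (VSc c s) = vgvars s"
| "vgvars (VAct g s) = gvars g \<union> vgvars s"

primrec vvvars :: "'k vt \<Rightarrow> nat set" where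
  "vvvars (VV i) = {i}"
| "vvvars VZero = {}"
| "vvvars (VAdd s t) = vvvars s \<union> vvvars t"
| "vvvars (VNeg s) = vvvars s"
| "vvvars (VSc c s) = vvvars s"
| "vvvars (VAct g s) = vvvars s"

inductive gder :: "'k::field ident set \<Rightarrow> gt \<Rightarrow> gt \<Rightarrow> bool"
  and vder :: "'k::field ident set \<Rightarrow> 'k vt \<Rightarrow> 'k vt \<Rightarrow> bool"
  for E :: "'k ident set" where
  g_ax: "GEq l r \<in> E \<union> base_ids \<Longrightarrow> gder E (gsubst \<sigma> l) (gsubst \<sigma> r)"
| g_refl: "gder E t t"
| g_sym: "gder E s t \<Longrightarrow> gder E t s"
| g_trans: "gder E s t \<Longrightarrow> gder E t r \<Longrightarrow> gder E s r"
| g_mul: "gder E s s' \<Longrightarrow> gder E t t' \<Longrightarrow> gder E (GMul s t) (GMul s' t')"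
| g_inv: "gder E s s' \<Longrightarrow> gder E (GInv s) (GInv s')"
| v_ax: "VEq l r \<in> E \<union> base_ids \<Longrightarrow> vder E (vsubst \<sigma> \<tau> l) (vsubst \<sigma> \<tau> r)"
| v_refl: "vder E t t"
| v_sym: "vder E s t \<Longrightarrow> vder E t s"
| v_trans: "vder E s t \<Longrightarrow> vder E t r \<Longrightarrow> vder E s r"
| v_add: "vder E s s' \<Longrightarrow> vder E t t' \<Longrightarrow> vder E (VAdd s t) (VAdd s' t')"
| v_neg: "vder E s s' \<Longrightarrow> vder E (VNeg s) (VNeg s')"
| v_sc: "vder E s s' \<Longrightarrow> vder E (VSc c s) (VSc c s')"
| v_act: "gder E g g' \<Longrightarrow> vder E s s' \<Longrightarrow> vder E (VAct g s) (VAct g' s')"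

definition gcls :: "'k::field ident set \<Rightarrow> gt \<Rightarrow> gt set" where
  "gcls E t = {s. gder E t s}"

definition vcls :: "'k::field ident set \<Rightarrow> 'k vt \<Rightarrow> 'k vt set" where
  "vcls E t = {s. vder E t s}"

text \<open>The free algebra F(Y) of the variety defined by E, with free generating set
  Y = Y^(1) \<uplus> Y^(2), Y^(1) = {x_0^(1),...,x_(m-1)^(1)}, Y^(2) = {x_0^(2),...,x_(n-1)^(2)}:
  terms in these variables modulo equational consequence.\<close>
definition free_rep :: "'k::field ident set \<Rightarrow> nat \<Rightarrow> nat \<Rightarrow> (gt set, 'k vt set, 'k) rep_struct" where
  "free_rep E m n =
    \<lparr> gcar = gcls E ` {t. gvars t \<subseteq> {..<m}},
      gmul = (\<lambda>X Y. gcls E (GMul (SOME t. t \<in> X) (SOME t. t \<in> Y))),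
      ginv = (\<lambda>X. gcls E (GInv (SOME t. t \<in> X))),
      gone = gcls E GOne,
      vcar = vcls E ` {t. vgvars t \<subseteq> {..<m} \<and> vvvars t \<subseteq> {..<n}},
      vadd = (\<lambda>U V. vcls E (VAdd (SOME t. t \<in> U) (SOME t. t \<in> V))),
      vzero = vcls E VZero,
      vneg = (\<lambda>U. vcls E (VNeg (SOME t. t \<in> U))),
      vsc = (\<lambda>c U. vcls E (VSc c (SOME t. t \<in> U))),
      act = (\<lambda>X U. vcls E (VAct (SOME t. t \<in> X) (SOME t. t \<in> U))) \<rparr>"

definition rep_iso :: "('g1, 'v1, 'k) rep_struct \<Rightarrow> ('g2, 'v2, 'k) rep_struct \<Rightarrow> bool" where
  "rep_iso A B \<longleftrightarrow> (\<exists>f h.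
     bij_betw f (gcar A) (gcar B) \<and> bij_betw h (vcar A) (vcar B) \<and>
     (\<forall>x\<in>gcar A. \<forall>y\<in>gcar A. f (gmul A x y) = gmul B (f x) (f y)) \<and>
     (\<forall>x\<in>gcar A. f (ginv A x) = ginv B (f x)) \<and>
     f (gone A) = gone B \<and>
     (\<forall>u\<in>vcar A. \<forall>v\<in>vcar A. h (vadd A u v) = vadd B (h u) (h v)) \<and>
     (\<forall>u\<in>vcar A. h (vneg A u) = vneg B (h u)) \<and>
     h (vzero A) = vzero B \<and>
     (\<forall>c. \<forall>u\<in>vcar A. h (vsc A c u) = vsc B c (h u)) \<and>
     (\<forall>x\<in>gcar A. \<forall>u\<in>vcar A. h (act A x u) = act B (f x) (h u)))"

end

theory Submission
  imports Defs "HOL-Algebra.Multiplicative_Group" "HOL-Library.Function_Algebras" "HOL.Vector_Spaces"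
begin


primrec expsum :: "nat \<Rightarrow> gt \<Rightarrow> int" where
  "expsum i (GV j) = (if i = j then 1 else 0)"
| "expsum i GOne = 0"
| "expsum i (GMul s t) = expsum i s + expsum i t"
| "expsum i (GInv s) = - expsum i s"

primrec coef :: "nat \<Rightarrow> 'k::field vt \<Rightarrow> 'k" where
  "coef i (VV j) = (if i = j then 1 else 0)"
| "coef i VZero = 0"
| "coef i (VAdd s t) = coef i s + coef i t"
| "coef i (VNeg s) = - coef i s"
| "coef i (VSc c s) = c * coef i s"
| "coef i (VAct g s) = coef i s"

lemma mod_sum_cong': "(\<And>x. x \<in> A \<Longrightarrow> f x mod N = g x mod N) \<Longrightarrow> sum f A mod N = sum g A mod (N::int)"
  by (induct A rule: infinite_finite_induct) (auto intro: mod_add_cong)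

lemma finite_gvars: "finite (gvars t)" by (induction t) auto
lemma finite_vvvars: "finite (vvvars t)" by (induction t) auto

lemma expsum_subst:
  "finite S \<Longrightarrow> gvars t \<subseteq> S \<Longrightarrow> expsum i (gsubst \<sigma> t) = (\<Sum>j\<in>S. expsum j t * expsum i (\<sigma> j))"
proof (induction t)
  case (GV k)
  then have "(\<Sum>j\<in>S. expsum j (GV k) * expsum i (\<sigma> j)) = (\<Sum>j\<in>S. if j = k then expsum i (\<sigma> j) else 0)"
    by (intro sum.cong) auto
  also have "\<dots> = expsum i (\<sigma> k)" using GV by simp
  finally show ?case by simp
next
  case (GMul s t)
  then show ?case by (simp add: distrib_right sum.distrib)
next
  case (GInv s)
  then show ?case by (simp add: sum_negf)
qed simp

lemma coef_subst:
  "finite S \<Longrightarrow> vvvars t \<subseteq> S \<Longrightarrow> coef i (vsubst \<sigma> \<tau> t) = (\<Sum>j\<in>S. coef j t * coef i (\<tau> j))"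
proof (induction t)
  case (VV k)
  then have "(\<Sum>j\<in>S. coef j (VV k) * coef i (\<tau> j)) = (\<Sum>j\<in>S. if j = k then coef i (\<tau> j) else 0)"
    by (intro sum.cong) auto
  also have "\<dots> = coef i (\<tau> k)" using VV by simp
  finally show ?case by simp
next
  case (VAdd s t)
  then show ?case by (simp add: distrib_right sum.distrib)
next
  case (VNeg s)
  then show ?case by (simp add: sum_negf)
next
  case (VSc c s)
  then show ?case by (simp add: sum_distrib_left mult.assoc)
qed simp_all

lemma der_inv:
  fixes E :: "'k::field ident set" and N :: int
  assumes AG: "\<And>l r j. GEq l r \<in> E \<union> base_ids \<Longrightarrow> (expsum j l) mod N = (expsum j r) mod N"
    and AV: "\<And>l r j. VEq l r \<in> E \<union> base_ids \<Longrightarrow> coef j l = coef j r"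
  shows "gder E s t \<Longrightarrow> (\<forall>i. (expsum i s) mod N = (expsum i t) mod N)"
    and "vder E u v \<Longrightarrow> (\<forall>i. coef i u = coef i v)"
proof (induction rule: gder_vder.inducts)
  case (g_ax l r \<sigma>)
  show ?case
  proof
    fix i
    let ?S = "gvars l \<union> gvars r"
    have "expsum i (gsubst \<sigma> l) = (\<Sum>j\<in>?S. expsum j l * expsum i (\<sigma> j))"
      by (rule expsum_subst) (auto simp: finite_gvars)
    moreover have "expsum i (gsubst \<sigma> r) = (\<Sum>j\<in>?S. expsum j r * expsum i (\<sigma> j))"
      by (rule expsum_subst) (auto simp: finite_gvars)
    moreover have "((\<Sum>j\<in>?S. expsum j l * expsum i (\<sigma> j))) mod N = ((\<Sum>j\<in>?S. expsum j r * expsum i (\<sigma> j))) mod N"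
      by (intro mod_sum_cong' mod_mult_cong AG[OF g_ax] refl)
    ultimately show "(expsum i (gsubst \<sigma> l)) mod N = (expsum i (gsubst \<sigma> r)) mod N" by simp
  qed
next
  case (g_sym s t) then show ?case by auto
next
  case (g_trans s t r) then show ?case by auto
next
  case (g_mul s s' t t') then show ?case by (auto intro: mod_add_cong)
next
  case (g_inv s s') then show ?case
    by (auto intro: mod_minus_cong)
next
  case (v_ax l r \<sigma> \<tau>)
  show ?case
  proof
    fix i
    let ?S = "vvvars l \<union> vvvars r"
    have "coef i (vsubst \<sigma> \<tau> l) = (\<Sum>j\<in>?S. coef j l * coef i (\<tau> j))"
      by (rule coef_subst) (auto simp: finite_vvvars)
    moreover have "coef i (vsubst \<sigma> \<tau> r) = (\<Sum>j\<in>?S. coef j r * coef i (\<tau> j))"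
      by (rule coef_subst) (auto simp: finite_vvvars)
    ultimately show "coef i (vsubst \<sigma> \<tau> l) = coef i (vsubst \<sigma> \<tau> r)" using AV[OF v_ax] by simp
  qed
qed auto




context fixes E :: "'k::field ident set" begin

lemma gcls_eq: "gcls E s = gcls E t \<longleftrightarrow> gder E s t"
proof
  assume "gcls E s = gcls E t"
  moreover have "t \<in> gcls E t" by (simp add: gcls_def gder_vder.g_refl)
  ultimately show "gder E s t" by (metis gcls_def mem_Collect_eq)
next
  assume st: "gder E s t"
  show "gcls E s = gcls E t"
    unfolding gcls_def using st by (auto intro: gder_vder.g_trans gder_vder.g_sym)
qed

lemma vcls_eq: "vcls E s = vcls E t \<longleftrightarrow> vder E s t"
proof
  assume "vcls E s = vcls E t"
  moreover have "t \<in> vcls E t" by (simp add: vcls_def gder_vder.v_refl)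
  ultimately show "vder E s t" by (metis vcls_def mem_Collect_eq)
next
  assume st: "vder E s t"
  show "vcls E s = vcls E t"
    unfolding vcls_def using st by (auto intro: gder_vder.v_trans gder_vder.v_sym)
qed

lemma some_gcls: "gder E s (SOME x. x \<in> gcls E s)"
proof -
  have "s \<in> gcls E s" by (simp add: gcls_def gder_vder.g_refl)
  then have "(SOME x. x \<in> gcls E s) \<in> gcls E s" by (rule someI)
  then show ?thesis by (simp add: gcls_def)
qed

lemma some_vcls: "vder E s (SOME x. x \<in> vcls E s)"
proof -
  have "s \<in> vcls E s" by (simp add: vcls_def gder_vder.v_refl)
  then have "(SOME x. x \<in> vcls E s) \<in> vcls E s" by (rule someI)
  then show ?thesis by (simp add: vcls_def)
qed

lemma some_gcls': "gder E (SOME x. x \<in> gcls E s) s"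
  by (rule gder_vder.g_sym[OF some_gcls])
lemma some_vcls': "vder E (SOME x. x \<in> vcls E s) s"
  by (rule gder_vder.v_sym[OF some_vcls])

lemma F_gmul: "gmul (free_rep E m n) (gcls E s) (gcls E t) = gcls E (GMul s t)"
  by (simp add: free_rep_def gcls_eq gder_vder.g_mul some_gcls')
lemma F_ginv: "ginv (free_rep E m n) (gcls E s) = gcls E (GInv s)"
  by (simp add: free_rep_def gcls_eq gder_vder.g_inv some_gcls')
lemma F_gone: "gone (free_rep E m n) = gcls E GOne"
  by (simp add: free_rep_def)
lemma F_vadd: "vadd (free_rep E m n) (vcls E s) (vcls E t) = vcls E (VAdd s t)"
  by (simp add: free_rep_def vcls_eq gder_vder.v_add some_vcls')
lemma F_vneg: "vneg (free_rep E m n) (vcls E s) = vcls E (VNeg s)"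
  by (simp add: free_rep_def vcls_eq gder_vder.v_neg some_vcls')
lemma F_vsc: "vsc (free_rep E m n) c (vcls E s) = vcls E (VSc c s)"
  by (simp add: free_rep_def vcls_eq gder_vder.v_sc some_vcls')
lemma F_vzero: "vzero (free_rep E m n) = vcls E VZero"
  by (simp add: free_rep_def)
lemma F_act: "act (free_rep E m n) (gcls E g) (vcls E s) = vcls E (VAct g s)"
  by (simp add: free_rep_def vcls_eq gder_vder.v_act some_vcls' some_gcls')
lemma F_gcar: "gcar (free_rep E m n) = gcls E ` {t. gvars t \<subseteq> {..<m}}"
  by (simp add: free_rep_def)
lemma F_vcar: "vcar (free_rep E m n) = vcls E ` {t. vgvars t \<subseteq> {..<m} \<and> vvvars t \<subseteq> {..<n}}"
  by (simp add: free_rep_def)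

lemma F_closed: "closed_struct (free_rep E m n)"
  unfolding closed_struct_def F_gcar F_vcar
  by (auto simp: F_gmul F_ginv F_gone F_vadd F_vneg F_vsc F_vzero F_act
      simp del: free_rep_def intro!: image_eqI)

end




lemma sum_fun_apply': "(sum f (t::'x set)) (x::'y) = (\<Sum>w\<in>t. f w x)" for f :: "'x \<Rightarrow> 'y \<Rightarrow> 'z::comm_monoid_add"
  by (induction t rule: infinite_finite_induct) auto

lemma la_bound:
  fixes J :: "(nat \<Rightarrow> 'k::field) \<Rightarrow> (nat \<Rightarrow> 'k)" and n1 n2 :: nat
  assumes Jadd: "\<And>a b. J (a + b) = J a + J b"
    and Jsc: "\<And>c a. J (\<lambda>i. c * a i) = (\<lambda>i. c * J a i)"
    and Jinj: "\<And>a b. (\<forall>i\<ge>n2. a i = 0) \<Longrightarrow> (\<forall>i\<ge>n2. b i = 0) \<Longrightarrow> J a = J b \<Longrightarrow> a = b"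
    and Jrange: "\<And>a. (\<forall>i\<ge>n2. a i = 0) \<Longrightarrow> (\<forall>i\<ge>n1. J a i = 0)"
  shows "n2 \<le> n1"
proof -
  define sc :: "'k \<Rightarrow> (nat \<Rightarrow> 'k) \<Rightarrow> (nat \<Rightarrow> 'k)" where "sc = (\<lambda>c f i. c * f i)"
  interpret h: module_hom sc sc J
    by unfold_locales (auto simp: sc_def Jadd Jsc algebra_simps fun_eq_iff)
  interpret vs: vector_space sc
    by unfold_locales (auto simp: sc_def algebra_simps fun_eq_iff)
  define e :: "nat \<Rightarrow> nat \<Rightarrow> 'k" where "e = (\<lambda>j i. if i = j then 1 else 0)"
  define V where "V = (\<lambda>n. {f :: nat \<Rightarrow> 'k. \<forall>i\<ge>n. f i = 0})"
  have einj: "inj e" unfolding inj_def e_def by (metis one_neq_zero)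
  have cardE: "card (e ` {..<n}) = n" for n using einj by (simp add: card_image inj_on_subset)
  have subV: "h.m1.subspace (V n)" for n
    using h.m1.subspace_def[of "V n"] unfolding V_def sc_def by (auto simp: zero_fun_def)
  have eV: "e ` {..<n} \<subseteq> V n" for n unfolding V_def e_def by auto
  have spanV: "h.m1.span (e ` {..<n}) \<subseteq> V n" for n
    by (rule h.m1.span_minimal[OF eV subV])
  have indep: "h.m1.independent (e ` {..<n})" for n
    unfolding h.m1.independent_explicit_module
  proof (intro allI impI)
    fix t u v
    assume t: "finite t" "t \<subseteq> e ` {..<n}" "(\<Sum>v\<in>t. sc (u v) v) = 0" "v \<in> t"
    then obtain j where j: "v = e j" by auto
    have "0 = (\<Sum>w\<in>t. sc (u w) w) j" using t(3) by simp
    also have "\<dots> = (\<Sum>w\<in>t. u w * w j)" by (simp add: sum_fun_apply' sc_def)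
    also have "\<dots> = (\<Sum>w\<in>{v}. u w * w j)"
    proof (rule sum.mono_neutral_right[OF t(1)])
      show "{v} \<subseteq> t" using t by auto
      show "\<forall>i\<in>t - {v}. u i * i j = 0"
      proof
        fix w assume w: "w \<in> t - {v}"
        then obtain x where x: "w = e x" using t(2) by auto
        with w j have "x \<noteq> j" by auto
        with x show "u w * w j = 0" by (simp add: e_def)
      qed
    qed
    also have "\<dots> = u v" using j by (simp add: e_def)
    finally show "u v = 0" by simp
  qed
  have VspanE: "V n \<subseteq> h.m1.span (e ` {..<n})" for n
  proof
    fix f assume f: "f \<in> V n"
    have "f = (\<Sum>j<n. sc (f j) (e j))"
    proof
      fix i
      have "(\<Sum>j<n. sc (f j) (e j)) i = (\<Sum>j<n. f j * e j i)" by (simp add: sum_fun_apply' sc_def)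
      also have "\<dots> = (\<Sum>j<n. if j = i then f j else 0)" by (rule sum.cong) (auto simp: e_def)
      also have "\<dots> = f i" using f by (simp add: V_def)
      finally show "f i = (\<Sum>j<n. sc (f j) (e j)) i" by simp
    qed
    also have "\<dots> \<in> h.m1.span (e ` {..<n})"
      by (intro h.m1.span_sum h.m1.span_scale h.m1.span_base) auto
    finally show "f \<in> h.m1.span (e ` {..<n})" .
  qed
  have injJ: "inj_on J (h.m1.span (e ` {..<n2}))"
    using spanV[of n2] Jinj unfolding V_def inj_on_def by blast
  have i2: "h.m1.independent (J ` e ` {..<n2})"
    by (rule h.independent_injective_image[OF indep injJ])
  have sub: "J ` e ` {..<n2} \<subseteq> h.m1.span (e ` {..<n1})"
  proof
    fix y assume "y \<in> J ` e ` {..<n2}"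
    then obtain a where a: "a \<in> e ` {..<n2}" "y = J a" by blast
    have "a \<in> V n2" using a(1) eV by blast
    then have "y \<in> V n1" using Jrange a(2) unfolding V_def by blast
    then show "y \<in> h.m1.span (e ` {..<n1})" using VspanE by blast
  qed
  have "card (J ` e ` {..<n2}) \<le> card (e ` {..<n1})"
    using vs.independent_span_bound[OF _ i2 sub] by simp
  moreover have "card (J ` e ` {..<n2}) = n2"
    using cardE[of n2] injJ h.m1.span_superset[of "e ` {..<n2}"]
    by (metis card_image inj_on_subset)
  ultimately show ?thesis using cardE[of n1] by simp
qed


definition HG :: "int \<Rightarrow> ('g, 'v, 'k) rep_struct \<Rightarrow> ('g \<Rightarrow> int) set" where
  "HG N F = {\<phi>. (\<forall>X\<in>gcar F. \<forall>Y\<in>gcar F. \<phi> (gmul F X Y) = (\<phi> X + \<phi> Y) mod N) \<and>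
     (\<forall>X\<in>gcar F. \<phi> (ginv F X) = (- \<phi> X) mod N) \<and> \<phi> (gone F) = 0}"

definition HV :: "('g, 'v, 'k) rep_struct \<Rightarrow> ('v \<Rightarrow> 'k::field) set" where
  "HV F = {\<phi>. (\<forall>U\<in>vcar F. \<forall>V\<in>vcar F. \<phi> (vadd F U V) = \<phi> U + \<phi> V) \<and>
     (\<forall>U\<in>vcar F. \<phi> (vneg F U) = - \<phi> U) \<and> \<phi> (vzero F) = 0 \<and>
     (\<forall>c. \<forall>U\<in>vcar F. \<phi> (vsc F c U) = c * \<phi> U) \<and>
     (\<forall>X\<in>gcar F. \<forall>U\<in>vcar F. \<phi> (act F X U) = \<phi> U)}"

definition PhiG :: "int \<Rightarrow> nat \<Rightarrow> (nat \<Rightarrow> int) \<Rightarrow> gt set \<Rightarrow> int" where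
  "PhiG N m a X = (\<Sum>i<m. a i * expsum i (SOME t. t \<in> X)) mod N"

definition PhiV :: "nat \<Rightarrow> (nat \<Rightarrow> 'k::field) \<Rightarrow> 'k vt set \<Rightarrow> 'k" where
  "PhiV n a U = (\<Sum>i<n. a i * coef i (SOME t. t \<in> U))"

context
  fixes E :: "'k::field ident set" and N :: int
  assumes AG: "\<And>l r j. GEq l r \<in> E \<union> base_ids \<Longrightarrow> (expsum j l) mod N = (expsum j r) mod N"
    and AV: "\<And>l r j. VEq l r \<in> E \<union> base_ids \<Longrightarrow> coef j l = coef j r"
begin

lemma HG_det:
  assumes "\<phi> \<in> HG N (free_rep E m n)" "\<psi> \<in> HG N (free_rep E m n)"
    and gen: "\<And>i. i < m \<Longrightarrow> \<phi> (gcls E (GV i)) = \<psi> (gcls E (GV i))"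
  shows "gvars t \<subseteq> {..<m} \<Longrightarrow> \<phi> (gcls E t) = \<psi> (gcls E t)"
proof (induction t)
  case (GV x) then show ?case using gen by simp
next
  case GOne
  have "gcls E GOne = gone (free_rep E m n)" by (simp only: F_gone)
  then show ?case using assms(1,2) unfolding HG_def by simp
next
  case (GMul s t)
  have c: "gcls E s \<in> gcar (free_rep E m n)" "gcls E t \<in> gcar (free_rep E m n)"
    using GMul.prems by (auto simp: F_gcar simp del: free_rep_def)
  have "\<phi> (gcls E (GMul s t)) = (\<phi> (gcls E s) + \<phi> (gcls E t)) mod N"
    using assms(1) c unfolding HG_def F_gmul[of E m n, symmetric] by blast
  moreover have "\<psi> (gcls E (GMul s t)) = (\<psi> (gcls E s) + \<psi> (gcls E t)) mod N"
    using assms(2) c unfolding HG_def F_gmul[of E m n, symmetric] by blast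
  ultimately show ?case using GMul by simp
next
  case (GInv s)
  have c: "gcls E s \<in> gcar (free_rep E m n)"
    using GInv.prems by (auto simp: F_gcar simp del: free_rep_def)
  have "\<phi> (gcls E (GInv s)) = (- \<phi> (gcls E s)) mod N"
    using assms(1) c unfolding HG_def F_ginv[of E m n, symmetric] by blast
  moreover have "\<psi> (gcls E (GInv s)) = (- \<psi> (gcls E s)) mod N"
    using assms(2) c unfolding HG_def F_ginv[of E m n, symmetric] by blast
  ultimately show ?case using GInv by simp
qed

lemma HV_det:
  assumes "\<phi> \<in> HV (free_rep E m n)" "\<psi> \<in> HV (free_rep E m n)"
    and gen: "\<And>i. i < n \<Longrightarrow> \<phi> (vcls E (VV i)) = \<psi> (vcls E (VV i))"
  shows "vgvars t \<subseteq> {..<m} \<Longrightarrow> vvvars t \<subseteq> {..<n} \<Longrightarrow> \<phi> (vcls E t) = \<psi> (vcls E t)"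
proof (induction t)
  case (VV x) then show ?case using gen by simp
next
  case VZero
  have "vcls E VZero = vzero (free_rep E m n)" by (simp only: F_vzero)
  then show ?case using assms(1,2) unfolding HV_def by simp
next
  case (VAdd s t)
  have c: "vcls E s \<in> vcar (free_rep E m n)" "vcls E t \<in> vcar (free_rep E m n)"
    using VAdd.prems by (auto simp: F_vcar simp del: free_rep_def)
  have "\<phi> (vcls E (VAdd s t)) = \<phi> (vcls E s) + \<phi> (vcls E t)"
    using assms(1) c unfolding HV_def F_vadd[of E m n, symmetric] by blast
  moreover have "\<psi> (vcls E (VAdd s t)) = \<psi> (vcls E s) + \<psi> (vcls E t)"
    using assms(2) c unfolding HV_def F_vadd[of E m n, symmetric] by blast
  ultimately show ?case using VAdd by simp
next
  case (VNeg s)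
  have c: "vcls E s \<in> vcar (free_rep E m n)"
    using VNeg.prems by (auto simp: F_vcar simp del: free_rep_def)
  have "\<phi> (vcls E (VNeg s)) = - \<phi> (vcls E s)"
    using assms(1) c unfolding HV_def F_vneg[of E m n, symmetric] by blast
  moreover have "\<psi> (vcls E (VNeg s)) = - \<psi> (vcls E s)"
    using assms(2) c unfolding HV_def F_vneg[of E m n, symmetric] by blast
  ultimately show ?case using VNeg by simp
next
  case (VSc d s)
  have c: "vcls E s \<in> vcar (free_rep E m n)"
    using VSc.prems by (auto simp: F_vcar simp del: free_rep_def)
  have "\<phi> (vcls E (VSc d s)) = d * \<phi> (vcls E s)"
    using assms(1) c unfolding HV_def F_vsc[of E m n, symmetric] by blast
  moreover have "\<psi> (vcls E (VSc d s)) = d * \<psi> (vcls E s)"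
    using assms(2) c unfolding HV_def F_vsc[of E m n, symmetric] by blast
  ultimately show ?case using VSc by simp
next
  case (VAct g s)
  have c: "vcls E s \<in> vcar (free_rep E m n)" "gcls E g \<in> gcar (free_rep E m n)"
    using VAct.prems by (auto simp: F_vcar F_gcar simp del: free_rep_def)
  have "\<phi> (vcls E (VAct g s)) = \<phi> (vcls E s)"
    using assms(1) c unfolding HV_def F_act[of E m n, symmetric] by blast
  moreover have "\<psi> (vcls E (VAct g s)) = \<psi> (vcls E s)"
    using assms(2) c unfolding HV_def F_act[of E m n, symmetric] by blast
  ultimately show ?case using VAct by simp
qed

lemma expsum_some: "expsum i (SOME t. t \<in> gcls E s) mod N = expsum i s mod N"
  using der_inv(1)[OF AG AV some_gcls'[of E s]] by blast

lemma coef_some: "coef i (SOME t. t \<in> vcls E s) = coef i s"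
  using der_inv(2)[OF AG AV some_vcls'[of E s]] by blast

lemma PhiG_cls: "PhiG N m a (gcls E s) = (\<Sum>i<m. a i * expsum i s) mod N"
  unfolding PhiG_def by (intro mod_sum_cong' mod_mult_cong refl expsum_some)

lemma PhiV_cls: "PhiV n a (vcls E s) = (\<Sum>i<n. a i * coef i s)"
  unfolding PhiV_def by (simp add: coef_some)

lemma PhiG_HG: "PhiG N m' a \<in> HG N (free_rep E m n)"
  unfolding HG_def
proof (intro CollectI conjI ballI)
  fix X Y assume "X \<in> gcar (free_rep E m n)" "Y \<in> gcar (free_rep E m n)"
  then obtain s t where st: "X = gcls E s" "Y = gcls E t" by (auto simp: F_gcar simp del: free_rep_def)
  show "PhiG N m' a (gmul (free_rep E m n) X Y) = (PhiG N m' a X + PhiG N m' a Y) mod N"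
    unfolding st F_gmul PhiG_cls by (simp add: distrib_left sum.distrib mod_add_eq)
next
  fix X assume "X \<in> gcar (free_rep E m n)"
  then obtain s where st: "X = gcls E s" by (auto simp: F_gcar simp del: free_rep_def)
  show "PhiG N m' a (ginv (free_rep E m n) X) = (- PhiG N m' a X) mod N"
    unfolding st F_ginv PhiG_cls by (simp add: sum_negf mod_minus_eq)
next
  show "PhiG N m' a (gone (free_rep E m n)) = 0"
    unfolding F_gone PhiG_cls by simp
qed

lemma PhiV_HV: "PhiV n' a \<in> HV (free_rep E m n)"
  unfolding HV_def
proof (intro CollectI conjI ballI allI)
  fix X Y assume "X \<in> vcar (free_rep E m n)" "Y \<in> vcar (free_rep E m n)"
  then obtain s t where st: "X = vcls E s" "Y = vcls E t" by (auto simp: F_vcar simp del: free_rep_def)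
  show "PhiV n' a (vadd (free_rep E m n) X Y) = PhiV n' a X + PhiV n' a Y"
    unfolding st F_vadd PhiV_cls by (simp add: distrib_left sum.distrib)
next
  fix X assume "X \<in> vcar (free_rep E m n)"
  then obtain s where st: "X = vcls E s" by (auto simp: F_vcar simp del: free_rep_def)
  show "PhiV n' a (vneg (free_rep E m n) X) = - PhiV n' a X"
    unfolding st F_vneg PhiV_cls by (simp add: sum_negf)
next
  show "PhiV n' a (vzero (free_rep E m n)) = 0"
    unfolding F_vzero PhiV_cls by simp
next
  fix c X assume "X \<in> vcar (free_rep E m n)"
  then obtain s where st: "X = vcls E s" by (auto simp: F_vcar simp del: free_rep_def)
  show "PhiV n' a (vsc (free_rep E m n) c X) = c * PhiV n' a X"
    unfolding st F_vsc PhiV_cls by (simp add: sum_distrib_left mult.left_commute)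
next
  fix X U assume "X \<in> gcar (free_rep E m n)" "U \<in> vcar (free_rep E m n)"
  then obtain g s where st: "X = gcls E g" "U = vcls E s"
    by (auto simp: F_vcar F_gcar simp del: free_rep_def)
  show "PhiV n' a (act (free_rep E m n) X U) = PhiV n' a U"
    unfolding st F_act PhiV_cls by simp
qed

lemma PhiG_gen: "j < m \<Longrightarrow> PhiG N m a (gcls E (GV j)) = a j mod N"
proof -
  assume j: "j < m"
  have "(\<Sum>i<m. a i * expsum i (GV j)) = (\<Sum>i<m. if i = j then a i else 0)"
    by (intro sum.cong) auto
  then show ?thesis using j by (simp add: PhiG_cls)
qed

lemma PhiV_gen: "j < n \<Longrightarrow> PhiV n a (vcls E (VV j)) = a j"
proof -
  assume j: "j < n"
  have "(\<Sum>i<n. a i * coef i (VV j)) = (\<Sum>i<n. if i = j then a i else 0)"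
    by (intro sum.cong) auto
  then show ?thesis using j by (simp add: PhiV_cls)
qed

end




context
  fixes E :: "'k::field ident set" and N :: int
  assumes AG: "\<And>l r j. GEq l r \<in> E \<union> base_ids \<Longrightarrow> (expsum j l) mod N = (expsum j r) mod N"
    and AV: "\<And>l r j. VEq l r \<in> E \<union> base_ids \<Longrightarrow> coef j l = coef j r"
begin

lemma group_bound:
  assumes N2: "N \<ge> 2" and iso: "rep_iso (free_rep E m1 n1) (free_rep E m2 n2)"
  shows "m2 \<le> m1"
proof -
  let ?F1 = "free_rep E m1 n1" and ?F2 = "free_rep E m2 n2"
  obtain f h where fb: "bij_betw f (gcar ?F1) (gcar ?F2)"
    and hb: "bij_betw h (vcar ?F1) (vcar ?F2)"
    and fmul: "\<forall>x\<in>gcar ?F1. \<forall>y\<in>gcar ?F1. f (gmul ?F1 x y) = gmul ?F2 (f x) (f y)"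
    and finv: "\<forall>x\<in>gcar ?F1. f (ginv ?F1 x) = ginv ?F2 (f x)"
    and fone: "f (gone ?F1) = gone ?F2"
    and hadd: "\<forall>u\<in>vcar ?F1. \<forall>v\<in>vcar ?F1. h (vadd ?F1 u v) = vadd ?F2 (h u) (h v)"
    and hneg: "\<forall>u\<in>vcar ?F1. h (vneg ?F1 u) = vneg ?F2 (h u)"
    and hzero: "h (vzero ?F1) = vzero ?F2"
    and hsc: "\<forall>c. \<forall>u\<in>vcar ?F1. h (vsc ?F1 c u) = vsc ?F2 c (h u)"
    and hact: "\<forall>x\<in>gcar ?F1. \<forall>u\<in>vcar ?F1. h (act ?F1 x u) = act ?F2 (f x) (h u)"
    by (insert iso[unfolded rep_iso_def], elim exE conjE, rule that, assumption+)
  have fin: "x \<in> gcar ?F1 \<Longrightarrow> f x \<in> gcar ?F2" for x by (rule bij_betw_apply[OF fb])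
  have comp: "PhiG N m2 a \<circ> f \<in> HG N ?F1" for a
  proof -
    have P: "PhiG N m2 a \<in> HG N ?F2" by (rule PhiG_HG[OF AG AV])
    show ?thesis unfolding HG_def
    proof (intro CollectI conjI ballI)
      fix X Y assume XY: "X \<in> gcar ?F1" "Y \<in> gcar ?F1"
      then show "(PhiG N m2 a \<circ> f) (gmul ?F1 X Y) = ((PhiG N m2 a \<circ> f) X + (PhiG N m2 a \<circ> f) Y) mod N"
        using P fmul fin unfolding HG_def by simp
    next
      fix X assume X: "X \<in> gcar ?F1"
      then show "(PhiG N m2 a \<circ> f) (ginv ?F1 X) = (- (PhiG N m2 a \<circ> f) X) mod N"
        using P finv fin unfolding HG_def by simp
    next
      show "(PhiG N m2 a \<circ> f) (gone ?F1) = 0" using P fone unfolding HG_def by simp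
    qed
  qed
  define J where "J a = (\<lambda>i\<in>{..<m1}. PhiG N m2 a (f (gcls E (GV i))))" for a
  let ?A = "\<lambda>m. PiE {..<m} (\<lambda>_. {0..<N})"
  have inj: "inj_on J (?A m2)"
  proof (rule inj_onI)
    fix a b assume a: "a \<in> ?A m2" and b: "b \<in> ?A m2" and Jab: "J a = J b"
    have gen: "(PhiG N m2 a \<circ> f) (gcls E (GV i)) = (PhiG N m2 b \<circ> f) (gcls E (GV i))" if "i < m1" for i
      using fun_cong[OF Jab, of i] that by (simp add: J_def)
    have all: "(PhiG N m2 a \<circ> f) (gcls E t) = (PhiG N m2 b \<circ> f) (gcls E t)" if "gvars t \<subseteq> {..<m1}" for t
      by (rule HG_det[OF AG AV comp comp gen that])
    show "a = b"
    proof
      fix j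
      show "a j = b j"
      proof (cases "j < m2")
        case True
        have "gcls E (GV j) \<in> gcar ?F2" using True by (auto simp: F_gcar simp del: free_rep_def)
        then obtain X where X: "X \<in> gcar ?F1" "f X = gcls E (GV j)"
          using fb by (metis bij_betw_imp_surj_on imageE)
        then obtain t where t: "gvars t \<subseteq> {..<m1}" "X = gcls E t" by (auto simp: F_gcar simp del: free_rep_def)
        have "PhiG N m2 a (gcls E (GV j)) = PhiG N m2 b (gcls E (GV j))"
          using all[OF t(1)] X t by simp
        then have "a j mod N = b j mod N" using PhiG_gen[OF AG AV True] by simp
        moreover have "a j \<in> {0..<N}" using PiE_mem[OF a] True by simp
        moreover have "b j \<in> {0..<N}" using PiE_mem[OF b] True by simp
        ultimately show ?thesis by (metis atLeastLessThan_iff mod_pos_pos_trivial)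
      next
        case False
        then show ?thesis using PiE_arb[OF a] PiE_arb[OF b] by simp
      qed
    qed
  qed
  have range: "J ` ?A m2 \<subseteq> ?A m1"
  proof
    fix y assume "y \<in> J ` ?A m2"
    then obtain a where "y = J a" by blast
    moreover have "PhiG N m2 a x \<in> {0..<N}" for x using N2 by (simp add: PhiG_def)
    ultimately show "y \<in> ?A m1" by (simp add: J_def)
  qed
  have card: "card (?A m) = nat N ^ m" for m by (simp add: card_PiE)
  have "card (?A m2) \<le> card (?A m1)"
    by (rule card_inj_on_le[OF inj range]) (simp add: finite_PiE)
  then have "nat N ^ m2 \<le> nat N ^ m1" by (simp only: card)
  moreover have "1 < nat N" using N2 by simp
  ultimately show ?thesis using power_le_imp_le_exp by blast
qed

lemma vec_bound:
  assumes iso: "rep_iso (free_rep E m1 n1) (free_rep E m2 n2)"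
  shows "n2 \<le> n1"
proof -
  let ?F1 = "free_rep E m1 n1" and ?F2 = "free_rep E m2 n2"
  obtain f h where fb: "bij_betw f (gcar ?F1) (gcar ?F2)"
    and hb: "bij_betw h (vcar ?F1) (vcar ?F2)"
    and fmul: "\<forall>x\<in>gcar ?F1. \<forall>y\<in>gcar ?F1. f (gmul ?F1 x y) = gmul ?F2 (f x) (f y)"
    and finv: "\<forall>x\<in>gcar ?F1. f (ginv ?F1 x) = ginv ?F2 (f x)"
    and fone: "f (gone ?F1) = gone ?F2"
    and hadd: "\<forall>u\<in>vcar ?F1. \<forall>v\<in>vcar ?F1. h (vadd ?F1 u v) = vadd ?F2 (h u) (h v)"
    and hneg: "\<forall>u\<in>vcar ?F1. h (vneg ?F1 u) = vneg ?F2 (h u)"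
    and hzero: "h (vzero ?F1) = vzero ?F2"
    and hsc: "\<forall>c. \<forall>u\<in>vcar ?F1. h (vsc ?F1 c u) = vsc ?F2 c (h u)"
    and hact: "\<forall>x\<in>gcar ?F1. \<forall>u\<in>vcar ?F1. h (act ?F1 x u) = act ?F2 (f x) (h u)"
    by (insert iso[unfolded rep_iso_def], elim exE conjE, rule that, assumption+)
  have fin: "x \<in> gcar ?F1 \<Longrightarrow> f x \<in> gcar ?F2" for x by (rule bij_betw_apply[OF fb])
  have hin: "x \<in> vcar ?F1 \<Longrightarrow> h x \<in> vcar ?F2" for x by (rule bij_betw_apply[OF hb])
  have comp: "PhiV n2 a \<circ> h \<in> HV ?F1" for a
  proof -
    have P: "PhiV n2 a \<in> HV ?F2" by (rule PhiV_HV[OF AG AV])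
    show ?thesis unfolding HV_def
    proof (intro CollectI conjI ballI allI)
      fix X Y assume XY: "X \<in> vcar ?F1" "Y \<in> vcar ?F1"
      then show "(PhiV n2 a \<circ> h) (vadd ?F1 X Y) = (PhiV n2 a \<circ> h) X + (PhiV n2 a \<circ> h) Y"
        using P hadd hin unfolding HV_def by simp
    next
      fix X assume X: "X \<in> vcar ?F1"
      then show "(PhiV n2 a \<circ> h) (vneg ?F1 X) = - (PhiV n2 a \<circ> h) X"
        using P hneg hin unfolding HV_def by simp
    next
      show "(PhiV n2 a \<circ> h) (vzero ?F1) = 0" using P hzero unfolding HV_def by simp
    next
      fix c X assume X: "X \<in> vcar ?F1"
      then show "(PhiV n2 a \<circ> h) (vsc ?F1 c X) = c * (PhiV n2 a \<circ> h) X"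
        using P hsc hin unfolding HV_def by simp
    next
      fix X U assume X: "X \<in> gcar ?F1" "U \<in> vcar ?F1"
      then show "(PhiV n2 a \<circ> h) (act ?F1 X U) = (PhiV n2 a \<circ> h) U"
        using P hact hin fin unfolding HV_def by simp
    qed
  qed
  define J where "J a = (\<lambda>i. if i < n1 then PhiV n2 a (h (vcls E (VV i))) else 0)" for a
  show ?thesis
  proof (rule la_bound[of J])
    fix a b :: "nat \<Rightarrow> 'k"
    show "J (a + b) = J a + J b"
      by (auto simp: J_def PhiV_def distrib_right sum.distrib fun_eq_iff)
  next
    fix c and a :: "nat \<Rightarrow> 'k"
    show "J (\<lambda>i. c * a i) = (\<lambda>i. c * J a i)"
      by (auto simp: J_def PhiV_def sum_distrib_left mult.assoc fun_eq_iff)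
  next
    fix a :: "nat \<Rightarrow> 'k"
    show "\<forall>i\<ge>n1. J a i = 0" by (simp add: J_def)
  next
    fix a b :: "nat \<Rightarrow> 'k"
    assume a: "\<forall>i\<ge>n2. a i = 0" and b: "\<forall>i\<ge>n2. b i = 0" and Jab: "J a = J b"
    have gen: "(PhiV n2 a \<circ> h) (vcls E (VV i)) = (PhiV n2 b \<circ> h) (vcls E (VV i))" if "i < n1" for i
      using fun_cong[OF Jab, of i] that by (simp add: J_def)
    have all: "(PhiV n2 a \<circ> h) (vcls E t) = (PhiV n2 b \<circ> h) (vcls E t)"
      if "vgvars t \<subseteq> {..<m1}" "vvvars t \<subseteq> {..<n1}" for t
      by (rule HV_det[OF AG AV comp comp gen that])
    show "a = b"
    proof
      fix j
      show "a j = b j"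
      proof (cases "j < n2")
        case True
        have "vcls E (VV j) \<in> vcar ?F2" using True by (auto simp: F_vcar simp del: free_rep_def)
        then obtain X where X: "X \<in> vcar ?F1" "h X = vcls E (VV j)"
          using hb by (metis bij_betw_imp_surj_on imageE)
        then obtain t where t: "vgvars t \<subseteq> {..<m1}" "vvvars t \<subseteq> {..<n1}" "X = vcls E t"
          by (auto simp: F_vcar simp del: free_rep_def)
        have "PhiV n2 a (vcls E (VV j)) = PhiV n2 b (vcls E (VV j))"
          using all[OF t(1,2)] X t by simp
        then show ?thesis using PhiV_gen[OF AG AV True] by simp
      next
        case False
        then show ?thesis using a b by simp
      qed
    qed
  qed
qed

end




lemma rep_iso_sym:
  assumes cA: "closed_struct A" and iso: "rep_iso A B"
  shows "rep_iso B A"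
proof -
  obtain f h where fb: "bij_betw f (gcar A) (gcar B)"
    and hb: "bij_betw h (vcar A) (vcar B)"
    and fmul: "\<forall>x\<in>gcar A. \<forall>y\<in>gcar A. f (gmul A x y) = gmul B (f x) (f y)"
    and finv: "\<forall>x\<in>gcar A. f (ginv A x) = ginv B (f x)"
    and fone: "f (gone A) = gone B"
    and hadd: "\<forall>u\<in>vcar A. \<forall>v\<in>vcar A. h (vadd A u v) = vadd B (h u) (h v)"
    and hneg: "\<forall>u\<in>vcar A. h (vneg A u) = vneg B (h u)"
    and hzero: "h (vzero A) = vzero B"
    and hsc: "\<forall>c. \<forall>u\<in>vcar A. h (vsc A c u) = vsc B c (h u)"
    and hact: "\<forall>x\<in>gcar A. \<forall>u\<in>vcar A. h (act A x u) = act B (f x) (h u)"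
    by (insert iso[unfolded rep_iso_def], elim exE conjE, rule that, assumption+)
  define f' where "f' = inv_into (gcar A) f"
  define h' where "h' = inv_into (vcar A) h"
  have fi: "inj_on f (gcar A)" and fs: "f ` gcar A = gcar B" using fb by (auto simp: bij_betw_def)
  have hi: "inj_on h (vcar A)" and hs: "h ` vcar A = vcar B" using hb by (auto simp: bij_betw_def)
  have f'in: "x \<in> gcar B \<Longrightarrow> f' x \<in> gcar A" for x unfolding f'_def using fs by (metis inv_into_into)
  have h'in: "x \<in> vcar B \<Longrightarrow> h' x \<in> vcar A" for x unfolding h'_def using hs by (metis inv_into_into)
  have ff': "x \<in> gcar B \<Longrightarrow> f (f' x) = x" for x unfolding f'_def using fs by (metis f_inv_into_f)
  have hh': "x \<in> vcar B \<Longrightarrow> h (h' x) = x" for x unfolding h'_def using hs by (metis f_inv_into_f)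
  have f'eq: "a \<in> gcar A \<Longrightarrow> f a = b \<Longrightarrow> f' b = a" for a b unfolding f'_def using fi by (rule inv_into_f_eq)
  have h'eq: "a \<in> vcar A \<Longrightarrow> h a = b \<Longrightarrow> h' b = a" for a b unfolding h'_def using hi by (rule inv_into_f_eq)
  have cl: "\<forall>x\<in>gcar A. \<forall>y\<in>gcar A. gmul A x y \<in> gcar A" "\<forall>x\<in>gcar A. ginv A x \<in> gcar A" "gone A \<in> gcar A"
     "\<forall>u\<in>vcar A. \<forall>v\<in>vcar A. vadd A u v \<in> vcar A" "\<forall>u\<in>vcar A. vneg A u \<in> vcar A" "vzero A \<in> vcar A"
     "\<forall>c. \<forall>u\<in>vcar A. vsc A c u \<in> vcar A" "\<forall>x\<in>gcar A. \<forall>u\<in>vcar A. act A x u \<in> vcar A"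
    using cA unfolding closed_struct_def by blast+
  show ?thesis unfolding rep_iso_def
  proof (intro exI[of _ f'] exI[of _ h'] conjI ballI allI)
    show "bij_betw f' (gcar B) (gcar A)" unfolding f'_def by (rule bij_betw_inv_into[OF fb])
    show "bij_betw h' (vcar B) (vcar A)" unfolding h'_def by (rule bij_betw_inv_into[OF hb])
    fix x y assume x: "x \<in> gcar B" and y: "y \<in> gcar B"
    show "f' (gmul B x y) = gmul A (f' x) (f' y)"
      by (rule f'eq) (use x y f'in ff' fmul cl in auto)
  next
    fix x assume x: "x \<in> gcar B"
    show "f' (ginv B x) = ginv A (f' x)"
      by (rule f'eq) (use x f'in ff' finv cl in auto)
  next
    show "f' (gone B) = gone A" by (rule f'eq) (use fone cl in auto)
  next
    fix x y assume x: "x \<in> vcar B" and y: "y \<in> vcar B"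
    show "h' (vadd B x y) = vadd A (h' x) (h' y)"
      by (rule h'eq) (use x y h'in hh' hadd cl in auto)
  next
    fix x assume x: "x \<in> vcar B"
    show "h' (vneg B x) = vneg A (h' x)"
      by (rule h'eq) (use x h'in hh' hneg cl in auto)
  next
    show "h' (vzero B) = vzero A" by (rule h'eq) (use hzero cl in auto)
  next
    fix c x assume x: "x \<in> vcar B"
    show "h' (vsc B c x) = vsc A c (h' x)"
      by (rule h'eq) (use x h'in hh' hsc cl in auto)
  next
    fix x u assume x: "x \<in> gcar B" and u: "u \<in> vcar B"
    show "h' (act B x u) = act A (f' x) (h' u)"
      by (rule h'eq) (use x u h'in f'in hh' ff' hact cl in auto)
  qed
qed

lemma sat_G: "sat A (GEq l r) \<Longrightarrow> closed_struct A \<Longrightarrow> (\<forall>i. \<sigma> i \<in> gcar A) \<Longrightarrow> geval A \<sigma> l = geval A \<sigma> r"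
proof -
  assume s: "sat A (GEq l r)" and c: "closed_struct A" and \<sigma>: "\<forall>i. \<sigma> i \<in> gcar A"
  have "\<forall>i. (\<lambda>_. vzero A) i \<in> vcar A" using c by (simp add: closed_struct_def)
  then show ?thesis using s \<sigma> by auto
qed

lemma sat_V: "sat A (VEq l r) \<Longrightarrow> (\<forall>i. \<sigma> i \<in> gcar A) \<Longrightarrow> (\<forall>i. \<tau> i \<in> vcar A) \<Longrightarrow> veval A \<sigma> \<tau> l = veval A \<sigma> \<tau> r"
  by simp

lemma in_var_sat: "in_variety E A \<Longrightarrow> e \<in> E \<union> base_ids \<Longrightarrow> sat A e"
  unfolding in_variety_def is_rep_def by blast

lemma in_var_closed: "in_variety E A \<Longrightarrow> closed_struct A"
  unfolding in_variety_def is_rep_def by blast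




lemma base_G:
  "GEq (GMul (GMul (GV 0) (GV 1)) (GV 2)) (GMul (GV 0) (GMul (GV 1) (GV 2))) \<in> base_ids"
  "GEq (GMul GOne (GV 0)) (GV 0) \<in> base_ids"
  "GEq (GMul (GInv (GV 0)) (GV 0)) GOne \<in> base_ids"
  "GEq (GMul (GV 0) (GInv (GV 0))) GOne \<in> base_ids"
  by (simp_all add: base_ids_def Let_def)

lemma base_V:
  "VEq (VAdd (VAdd (VV 0) (VV 1)) (VV 2)) (VAdd (VV 0) (VAdd (VV 1) (VV 2))) \<in> base_ids"
  "VEq (VAdd (VV 0) (VV 1)) (VAdd (VV 1) (VV 0)) \<in> base_ids"
  "VEq (VAdd VZero (VV 0)) (VV 0) \<in> base_ids"
  "VEq (VAdd (VNeg (VV 0)) (VV 0)) VZero \<in> base_ids"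
  "VEq (VSc 1 (VV 0)) (VV 0) \<in> base_ids"
  "VEq (VAct GOne (VV 0)) (VV 0) \<in> base_ids"
  "VEq (VSc (c + d) (VV 0)) (VAdd (VSc c (VV 0)) (VSc d (VV 0))) \<in> base_ids"
  "VEq (VSc (c * d) (VV 0)) (VSc c (VSc d (VV 0))) \<in> base_ids"
  by (auto simp add: base_ids_def Let_def)

definition s3 :: "'a \<Rightarrow> 'a \<Rightarrow> 'a \<Rightarrow> nat \<Rightarrow> 'a" where
  "s3 x y z = (\<lambda>i. if i = 0 then x else if i = 1 then y else z)"

lemma s3_in: "x \<in> S \<Longrightarrow> y \<in> S \<Longrightarrow> z \<in> S \<Longrightarrow> \<forall>i. s3 x y z i \<in> S"
  by (simp add: s3_def)

lemma s3_simps [simp]: "s3 x y z 0 = x" "s3 x y z (Suc 0) = y" "s3 x y z 2 = z"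
  by (simp_all add: s3_def)

lemma A1_AG:
  fixes E :: "'k::field ident set" and A :: "('g, 'v, 'k) rep_struct"
  assumes var: "in_variety E A" and nd: "\<not> sat A (GEq (GV 0) (GV 1))"
  shows "\<exists>N::int. N \<ge> 2 \<and> (\<forall>l r j. GEq l r \<in> E \<union> base_ids \<longrightarrow> expsum j l mod N = expsum j r mod N)"
proof -
  have cA: "closed_struct A" by (rule in_var_closed[OF var])
  have cl: "\<And>x y. x \<in> gcar A \<Longrightarrow> y \<in> gcar A \<Longrightarrow> gmul A x y \<in> gcar A"
    "\<And>x. x \<in> gcar A \<Longrightarrow> ginv A x \<in> gcar A" "gone A \<in> gcar A"
    using cA unfolding closed_struct_def by blast+
  have sG: "\<And>l r \<sigma>. GEq l r \<in> E \<union> base_ids \<Longrightarrow> \<forall>i. \<sigma> i \<in> gcar A \<Longrightarrow> geval A \<sigma> l = geval A \<sigma> r"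
    using sat_G in_var_sat[OF var] cA by blast
  have assoc: "gmul A (gmul A x y) z = gmul A x (gmul A y z)"
    if "x \<in> gcar A" "y \<in> gcar A" "z \<in> gcar A" for x y z
    using sG[OF UnI2[OF base_G(1)] s3_in[OF that]] by simp
  have lone: "gmul A (gone A) x = x" if "x \<in> gcar A" for x
    using sG[OF UnI2[OF base_G(2)] s3_in[OF that that that]] by simp
  have linv: "gmul A (ginv A x) x = gone A" if "x \<in> gcar A" for x
    using sG[OF UnI2[OF base_G(3)] s3_in[OF that that that]] by simp
  define G where "G = \<lparr>carrier = gcar A, mult = gmul A, one = gone A\<rparr>"
  have grp: "group G"
    unfolding G_def
    by (rule groupI) (auto simp: cl assoc lone intro!: bexI[of _ "ginv A x" for x] linv)
  interpret G: group G by (rule grp)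
  have invG: "inv\<^bsub>G\<^esub> x = ginv A x" if "x \<in> gcar A" for x
    using G.inv_equality[of "ginv A x" x] linv that cl unfolding G_def by simp
  obtain \<sigma> \<tau> where st: "\<forall>i. \<sigma> i \<in> gcar A" "\<forall>i. \<tau> i \<in> vcar A" "\<sigma> 0 \<noteq> \<sigma> (Suc 0)"
    using nd by auto
  obtain g where g: "g \<in> gcar A" "g \<noteq> gone A"
    using st by metis
  have gG: "g \<in> carrier G" using g unfolding G_def by simp
  have G1: "\<one>\<^bsub>G\<^esub> = gone A" "\<And>x y. x \<otimes>\<^bsub>G\<^esub> y = gmul A x y" "carrier G = gcar A"
    by (simp_all add: G_def)
  have ev: "geval A (\<lambda>i. if i = j then g else gone A) t = g [^]\<^bsub>G\<^esub> (expsum j t)" for j t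
  proof (induction t)
    case (GV x) then show ?case using gG by (simp add: G1)
  next
    case GOne then show ?case by (simp add: G1)
  next
    case (GMul s t) then show ?case using gG by (simp add: G.int_pow_mult G1)
  next
    case (GInv s) then show ?case using gG G.int_pow_closed[OF gG] invG
      by (simp add: G.int_pow_neg G1)
  qed
  define N where "N = (if G.ord g = 0 then 2 else int (G.ord g))"
  have "G.ord g \<noteq> 1" using G.ord_eq_1[OF gG] g by (simp add: G_def)
  then have N2: "N \<ge> 2" unfolding N_def by auto
  have "expsum j l mod N = expsum j r mod N" if lr: "GEq l r \<in> E \<union> base_ids" for l r j
  proof -
    have "\<forall>i. (\<lambda>i. if i = j then g else gone A) i \<in> gcar A" using g cl by simp
    then have "geval A (\<lambda>i. if i = j then g else gone A) l = geval A (\<lambda>i. if i = j then g else gone A) r"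
      by (rule sG[OF lr])
    then have "g [^]\<^bsub>G\<^esub> (expsum j l) = g [^]\<^bsub>G\<^esub> (expsum j r)" by (simp only: ev)
    then have d: "int (G.ord g) dvd (expsum j r - expsum j l)" using G.int_pow_eq[OF gG] by blast
    show ?thesis
    proof (cases "G.ord g = 0")
      case True then show ?thesis using d by simp
    next
      case False then show ?thesis using d unfolding N_def by (simp add: mod_eq_dvd_iff dvd_diff_commute)
    qed
  qed
  then show ?thesis using N2 by blast
qed




lemma A2_AV:
  fixes E :: "'k::field ident set" and A :: "('g, 'v, 'k) rep_struct"
  assumes var: "in_variety E A" and nd: "\<not> sat A (VEq (VV 0) (VV 1))"
  shows "\<forall>l r j. VEq l r \<in> E \<union> base_ids \<longrightarrow> coef j l = coef j r"
proof -
  have cA: "closed_struct A" by (rule in_var_closed[OF var])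
  have cl: "\<And>x y. x \<in> gcar A \<Longrightarrow> y \<in> gcar A \<Longrightarrow> gmul A x y \<in> gcar A"
    "\<And>x. x \<in> gcar A \<Longrightarrow> ginv A x \<in> gcar A" "gone A \<in> gcar A"
    "\<And>u v. u \<in> vcar A \<Longrightarrow> v \<in> vcar A \<Longrightarrow> vadd A u v \<in> vcar A"
    "\<And>u. u \<in> vcar A \<Longrightarrow> vneg A u \<in> vcar A" "vzero A \<in> vcar A"
    "\<And>c u. u \<in> vcar A \<Longrightarrow> vsc A c u \<in> vcar A"
    "\<And>x u. x \<in> gcar A \<Longrightarrow> u \<in> vcar A \<Longrightarrow> act A x u \<in> vcar A"
    using cA unfolding closed_struct_def by blast+
  have sV: "\<And>l r \<sigma> \<tau>. VEq l r \<in> E \<union> base_ids \<Longrightarrow> \<forall>i. \<sigma> i \<in> gcar A \<Longrightarrow> \<forall>i. \<tau> i \<in> vcar A \<Longrightarrow>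
      veval A \<sigma> \<tau> l = veval A \<sigma> \<tau> r"
    using in_var_sat[OF var] sat_V by metis
  have sG: "\<And>l r \<sigma>. GEq l r \<in> E \<union> base_ids \<Longrightarrow> \<forall>i. \<sigma> i \<in> gcar A \<Longrightarrow> geval A \<sigma> l = geval A \<sigma> r"
    using sat_G in_var_sat[OF var] cA by blast
  have one_in: "\<forall>i. (\<lambda>_. gone A) i \<in> gcar A" using cl by simp
  note V = sV[OF UnI2 one_in s3_in]
  have assoc: "vadd A (vadd A u v) w = vadd A u (vadd A v w)"
    if "u \<in> vcar A" "v \<in> vcar A" "w \<in> vcar A" for u v w
    using V[OF base_V(1) that] by simp
  have comm: "vadd A u v = vadd A v u" if "u \<in> vcar A" "v \<in> vcar A" for u v
    using V[OF base_V(2) that that(1)] by simp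
  have lzero: "vadd A (vzero A) u = u" if "u \<in> vcar A" for u
    using V[OF base_V(3) that that that] by simp
  have linv: "vadd A (vneg A u) u = vzero A" if "u \<in> vcar A" for u
    using V[OF base_V(4) that that that] by simp
  have sone: "vsc A 1 u = u" if "u \<in> vcar A" for u
    using V[OF base_V(5) that that that] by simp
  have act1: "act A (gone A) u = u" if "u \<in> vcar A" for u
    using V[OF base_V(6) that that that] by simp
  have sdist: "vsc A (c + d) u = vadd A (vsc A c u) (vsc A d u)" if "u \<in> vcar A" for u c d
    using V[OF base_V(7) that that that] by simp
  have smul: "vsc A (c * d) u = vsc A c (vsc A d u)" if "u \<in> vcar A" for u c d
    using V[OF base_V(8) that that that] by simp
  have g11: "gmul A (gone A) (gone A) = gone A"
    using sG[OF UnI2[OF base_G(2)] s3_in[OF cl(3) cl(3) cl(3)]] by simp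
  have ginv1: "ginv A (gone A) = gone A"
  proof -
    have a: "gmul A (gone A) (ginv A (gone A)) = gone A"
      using sG[OF UnI2[OF base_G(4)] s3_in[OF cl(3) cl(3) cl(3)]] by simp
    have b: "gmul A (gone A) (ginv A (gone A)) = ginv A (gone A)"
      using sG[OF UnI2[OF base_G(2)] s3_in[OF cl(2)[OF cl(3)] cl(2)[OF cl(3)] cl(2)[OF cl(3)]]] by simp
    from a b show ?thesis by simp
  qed
  have rzero: "vadd A u (vzero A) = u" if "u \<in> vcar A" for u
    using comm[OF that cl(6)] lzero[OF that] by simp
  have zsc: "vsc A 0 u = vzero A" if u: "u \<in> vcar A" for u
  proof -
    let ?w = "vsc A 0 u"
    have w: "?w \<in> vcar A" using cl u by simp
    have ww: "?w = vadd A ?w ?w" using sdist[OF u, of 0 0] by simp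
    have "vzero A = vadd A (vneg A ?w) ?w" using linv[OF w] by simp
    also have "\<dots> = vadd A (vneg A ?w) (vadd A ?w ?w)" using ww by simp
    also have "\<dots> = vadd A (vadd A (vneg A ?w) ?w) ?w" using assoc cl w by simp
    also have "\<dots> = ?w" using linv[OF w] lzero[OF w] by simp
    finally show ?thesis by simp
  qed
  have nsc: "vneg A (vsc A a u) = vsc A (- a) u" if u: "u \<in> vcar A" for u a
  proof -
    let ?x = "vsc A a u" and ?y = "vsc A (- a) u"
    have x: "?x \<in> vcar A" and y: "?y \<in> vcar A" and nx: "vneg A ?x \<in> vcar A" using cl u by simp_all
    have yx: "vadd A ?y ?x = vzero A" using sdist[OF u, of "- a" a, symmetric] zsc[OF u] by simp
    have "vneg A ?x = vadd A (vzero A) (vneg A ?x)" using lzero[OF nx] by simp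
    also have "\<dots> = vadd A (vadd A ?y ?x) (vneg A ?x)" using yx by simp
    also have "\<dots> = vadd A ?y (vadd A ?x (vneg A ?x))" using assoc x y nx by simp
    also have "\<dots> = vadd A ?y (vzero A)" using comm[OF x nx] linv[OF x] by simp
    also have "\<dots> = ?y" using rzero[OF y] by simp
    finally show ?thesis .
  qed
  obtain \<sigma> \<tau> where st: "\<forall>i. \<sigma> i \<in> gcar A" "\<forall>i. \<tau> i \<in> vcar A" "\<tau> 0 \<noteq> \<tau> (Suc 0)"
    using nd by auto
  obtain v where v: "v \<in> vcar A" "v \<noteq> vzero A"
    using st by metis
  have sinj: "a = b" if ab: "vsc A a v = vsc A b v" for a b
  proof (rule ccontr)
    assume ne: "a \<noteq> b"
    have "vsc A (a + - b) v = vadd A (vsc A a v) (vsc A (- b) v)" by (rule sdist[OF v(1)])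
    then have z1: "vsc A (a - b) v = vadd A (vsc A b v) (vsc A (- b) v)" using ab by simp
    have "vsc A (b + - b) v = vadd A (vsc A b v) (vsc A (- b) v)" by (rule sdist[OF v(1)])
    then have "vadd A (vsc A b v) (vsc A (- b) v) = vzero A" using zsc[OF v(1)] by simp
    with z1 have z: "vsc A (a - b) v = vzero A" by simp
    have "v = vsc A (inverse (a - b) * (a - b)) v" using ne sone[OF v(1)] by simp
    also have "\<dots> = vsc A (inverse (a - b)) (vzero A)" using smul[OF v(1)] z by simp
    also have "\<dots> = vsc A (inverse (a - b)) (vsc A 0 v)" using zsc[OF v(1)] by simp
    also have "\<dots> = vsc A (inverse (a - b) * 0) v" by (rule smul[OF v(1), symmetric])
    also have "\<dots> = vzero A" using zsc[OF v(1)] by simp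
    finally show False using v(2) by simp
  qed
  have gev: "geval A (\<lambda>_. gone A) g = gone A" for g
    by (induction g) (simp_all add: g11 ginv1)
  have vev: "veval A (\<lambda>_. gone A) (\<lambda>i::nat. if i = j then v else vzero A) t = vsc A (coef j t) v" for j t
  proof (induction t)
    case (VV x) then show ?case using sone[OF v(1)] zsc[OF v(1)] by simp
  next
    case VZero then show ?case using zsc[OF v(1)] by simp
  next
    case (VAdd s t) then show ?case using sdist[OF v(1)] by simp
  next
    case (VNeg s) then show ?case using nsc[OF v(1)] by simp
  next
    case (VSc c s) then show ?case using smul[OF v(1)] by simp
  next
    case (VAct g s) then show ?case using act1 cl(7)[OF v(1)] gev by simp
  qed
  show ?thesis
  proof (intro allI impI)
    fix l r j assume lr: "VEq l r \<in> E \<union> base_ids"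
    have "\<forall>i. (\<lambda>i::nat. if i = j then v else vzero A) i \<in> vcar A" using v cl by simp
    then have "veval A (\<lambda>_. gone A) (\<lambda>i::nat. if i = j then v else vzero A) l
             = veval A (\<lambda>_. gone A) (\<lambda>i::nat. if i = j then v else vzero A) r"
      by (rule sV[OF lr one_in])
    then have "vsc A (coef j l) v = vsc A (coef j r) v" by (simp only: vev)
    then show "coef j l = coef j r" by (rule sinj)
  qed
qed

theorem mainTheorem20:
  fixes E :: "'k::field ident set"
    and A1 :: "('g1, 'v1, 'k) rep_struct"
    and A2 :: "('g2, 'v2, 'k) rep_struct"
    and m1 n1 m2 n2 :: nat
  assumes nondeg1: "in_variety E A1" "\<not> sat A1 (GEq (GV 0) (GV 1))"
    and nondeg2: "in_variety E A2" "\<not> sat A2 (VEq (VV 0) (VV 1))"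
    and iso: "rep_iso (free_rep E m1 n1) (free_rep E m2 n2)"
  shows "m1 = m2 \<and> n1 = n2"
proof -
  obtain N :: int where N2: "N \<ge> 2"
    and AG: "\<forall>l r j. GEq l r \<in> E \<union> base_ids \<longrightarrow> expsum j l mod N = expsum j r mod N"
    using A1_AG[OF nondeg1] by blast
  have AV: "\<forall>l r j. VEq l r \<in> E \<union> base_ids \<longrightarrow> coef j l = coef j r"
    by (rule A2_AV[OF nondeg2])
  have iso': "rep_iso (free_rep E m2 n2) (free_rep E m1 n1)"
    by (rule rep_iso_sym[OF F_closed iso])
  have AG': "\<And>l r j. GEq l r \<in> E \<union> base_ids \<Longrightarrow> expsum j l mod N = expsum j r mod N" using AG by blast
  have AV': "\<And>l r j. VEq l r \<in> E \<union> base_ids \<Longrightarrow> coef j l = coef j r" using AV by blast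
  have "m2 \<le> m1" by (rule group_bound[OF AG' AV' N2 iso])
  moreover have "m1 \<le> m2" by (rule group_bound[OF AG' AV' N2 iso'])
  moreover have "n2 \<le> n1" by (rule vec_bound[OF AG' AV' iso])
  moreover have "n1 \<le> n2" by (rule vec_bound[OF AG' AV' iso'])
  ultimately show ?thesis by simp
qed


end
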